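(* Let $A\in\mathbb{R}^{n\times n}$, $B\in\mathbb{R}^{n\times m}$, $E\in\mathbb{R}^{n\times z}$, $C\in\mathbb{R}^{q\times n}$, $D\in\mathbb{R}^{q\times m}$, let $\gamma\ge 0$, and let $\mathcal{S}\subseteq\mathbb{R}^{m\times n}$ be a subspace with representation matrix $S=[S_1\ \cdots\ S_k]$. Suppose there exist $P\in\mathbb{S}^n$, $Q\in\mathbb{S}^q$, $R\in\Upsilon(S)$ and $L\in\mathcal{S}$ such that \[ \begin{bmatrix} P-EE^\top & AR+BL\\ (AR+BL)^\top & R+R^\top-P\end{bmatrix}\succ 0,\qquad \begin{bmatrix} Q & CR+DL\\ (CR+DL)^\top & R+R^\top-P\end{bmatrix}\succ 0, \] \[ P\succ 0,\qquad \operatorname{Tr}(Q)\le\gamma^2 . \] Then $R$ is nonsingular and $K=LR^{-1}$ belongs to $\mathcal{S}$ and is a $\gamma$-suboptimal $H_2$ controller for the system $x(t+1)=Ax(t)+Bu(t)+E\xi(t)$, $y(t)=Cx(t)+Du(t)$.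
   Context: Consider the discrete-time system $x(t+1)=Ax(t)+Bu(t)+E\xi(t)$, $y(t)=Cx(t)+Du(t)$ with state $x\in\mathbb{R}^n$, input $u\in\mathbb{R}^m$, exogenous input $\xi\in\mathbb{R}^z$, output $y\in\mathbb{R}^q$. For a static feedback $u=Kx$, $K\in\mathbb{R}^{m\times n}$, the closed loop is $x(t+1)=(A+BK)x(t)+E\xi(t)$, $y(t)=(C+DK)x(t)$; let $G_K(z)$ denote its transfer function from $\xi$ to $y$. $K$ is called a $\gamma$-suboptimal $H_2$ controller if $\|G_K(z)\|_{H_2}\le\gamma$. $\mathbb{S}^n$ denotes the real symmetric $n\times n$ matrices. If $S_1,\dots,S_k\in\mathbb{R}^{m\times n}$ form a basis of the subspace $\mathcal{S}$, the matrix $S=[S_1\ S_2\ \cdots\ S_k]\in\mathbb{R}^{m\times nk}$ is a representation matrix of $\mathcal{S}$, and $\Upsilon(S):=\{R\in\mathbb{R}^{n\times n}\mid \exists\Lambda\in\mathbb{S}^k:\ S(I_k\otimes R)=S(\Lambda\otimes I_n)\}$, where $\otimes$ is the Kronecker product. *)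

theory Defs
  imports "HOL-Analysis.Analysis"
begin

text \<open>Matrices are type-indexed: real^'c^'r is an r x c matrix. \<close>

definition sym_mat :: "real^'n^'n \<Rightarrow> bool" where
  "sym_mat M \<longleftrightarrow> transpose M = M"

definition pos_def :: "real^'n^'n \<Rightarrow> bool" where
  "pos_def M \<longleftrightarrow> sym_mat M \<and> (\<forall>x. x \<noteq> 0 \<longrightarrow> x \<bullet> (M *v x) > 0)"

definition block2 :: "real^'c1^'r1 \<Rightarrow> real^'c2^'r1 \<Rightarrow> real^'c1^'r2 \<Rightarrow> real^'c2^'r2
      \<Rightarrow> real^('c1 + 'c2)^('r1 + 'r2)" where
  "block2 M11 M12 M21 M22 = (\<chi> i j. case i of
      Inl a \<Rightarrow> (case j of Inl b \<Rightarrow> M11 $ a $ b | Inr b \<Rightarrow> M12 $ a $ b)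
    | Inr a \<Rightarrow> (case j of Inl b \<Rightarrow> M21 $ a $ b | Inr b \<Rightarrow> M22 $ a $ b))"

definition kron :: "real^'c1^'r1 \<Rightarrow> real^'c2^'r2 \<Rightarrow> real^('c1 \<times> 'c2)^('r1 \<times> 'r2)" where
  "kron X Y = (\<chi> i j. X $ fst i $ fst j * Y $ snd i $ snd j)"

text \<open>Representation matrix S = [S_1 ... S_k] of a family of m x n matrices indexed by 'k.\<close>
definition rep_matrix :: "('k::finite \<Rightarrow> real^'n^'m) \<Rightarrow> real^('k \<times> 'n)^'m" where
  "rep_matrix Sf = (\<chi> i jl. Sf (fst jl) $ i $ snd jl)"

definition Upsilon :: "real^('k::finite \<times> 'n)^'m \<Rightarrow> (real^'n^'n) set" where
  "Upsilon S = {R. \<exists>\<Lambda>::real^'k^'k. sym_mat \<Lambda> \<and>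
                    S ** kron (mat 1 :: real^'k^'k) R = S ** kron \<Lambda> (mat 1 :: real^'n^'n)}"

primrec matpow :: "real^'n^'n \<Rightarrow> nat \<Rightarrow> real^'n^'n" where
  "matpow M 0 = mat 1"
| "matpow M (Suc t) = M ** matpow M t"

text \<open>H2 norm of the transfer function G(z) = Cc (zI - Ac)^{-1} Ec of the system
  x(t+1) = Ac x(t) + Ec xi(t), y(t) = Cc x(t): square root of the sum of the squared
  Frobenius norms of its impulse response (Markov parameters) Cc Ac^t Ec; infinite if the
  sum diverges.\<close>
definition markov_sq :: "real^'n^'n \<Rightarrow> real^'z^'n \<Rightarrow> real^'n^'q \<Rightarrow> nat \<Rightarrow> real" where
  "markov_sq Ac Ec Cc t = (let G = Cc ** matpow Ac t ** Ec in trace (G ** transpose G))"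

definition h2_norm :: "real^'n^'n \<Rightarrow> real^'z^'n \<Rightarrow> real^'n^'q \<Rightarrow> ereal" where
  "h2_norm Ac Ec Cc = (if summable (markov_sq Ac Ec Cc)
                       then ereal (sqrt (suminf (markov_sq Ac Ec Cc))) else \<infinity>)"

definition gamma_subopt_H2 ::
  "real^'n^'n \<Rightarrow> real^'m^'n \<Rightarrow> real^'z^'n \<Rightarrow> real^'n^'q \<Rightarrow> real^'m^'q \<Rightarrow> real
     \<Rightarrow> real^'n^'m \<Rightarrow> bool" where
  "gamma_subopt_H2 A B E C D \<gamma> K \<longleftrightarrow> h2_norm (A + B ** K) E (C + D ** K) \<le> ereal \<gamma>"

end

theory Submission
  imports Defs
begin

lemma sum_plus_univ: "sum f (UNIV::('a::finite+'b::finite) set) = sum (f o Inl) UNIV + sum (f o Inr) UNIV"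
  by (metis UNIV_Plus_UNIV finite sum.Plus)

definition jv :: "real^'a \<Rightarrow> real^'b \<Rightarrow> real^('a+'b)" where
  "jv u v = (\<chi> i. case i of Inl a \<Rightarrow> u$a | Inr b \<Rightarrow> v$b)"

lemma block_quad:
  fixes u :: "real^'a::finite" and v :: "real^'b::finite"
  shows "jv u v \<bullet> (block2 M11 M12 M21 M22 *v jv u v) =
    u \<bullet> (M11 *v u) + u \<bullet> (M12 *v v) + v \<bullet> (M21 *v u) + v \<bullet> (M22 *v v)"
  unfolding jv_def block2_def inner_vec_def matrix_vector_mult_def
  by (simp add: sum_plus_univ o_def sum.distrib sum_distrib_left algebra_simps)

lemma jv_zero: "jv u v = 0 \<longleftrightarrow> u = 0 \<and> v = 0"
  unfolding jv_def vec_eq_iff by (auto split: sum.splits)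

lemma quad_transpose: "v \<bullet> (transpose (M::real^'a^'b) *v u) = u \<bullet> (M *v v)"
proof -
  have "v \<bullet> (transpose M *v u) = (u v* M) \<bullet> v" by (simp add: transpose_matrix_vector inner_commute)
  then show ?thesis by (simp add: dot_lmul_matrix)
qed

lemma pos_def_ge: "pos_def M \<Longrightarrow> 0 \<le> x \<bullet> (M *v x)"
  unfolding pos_def_def by (cases "x = 0") (auto intro: less_imp_le)

lemma sym_quad: "sym_mat P \<Longrightarrow> v \<bullet> (P *v y) = y \<bullet> (P *v v)"
  unfolding sym_mat_def by (metis quad_transpose)

lemma mv_neg: "(A::real^'a^'b) *v (- x) = - (A *v x)"
  by (simp add: vec_eq_iff matrix_vector_mult_def sum_negf)

lemma block_br:
  assumes "pos_def (block2 W X Y M)" "v \<noteq> 0"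
  shows "0 < v \<bullet> (M *v v)"
proof -
  have "0 < jv 0 v \<bullet> (block2 W X Y M *v jv 0 v)"
    using assms unfolding pos_def_def by (simp add: jv_zero)
  then show ?thesis by (simp add: block_quad)
qed

lemma R_inv:
  fixes R P :: "real^'n^'n"
  assumes "pos_def (block2 W X Y (R + transpose R - P))" "pos_def P"
  shows "invertible R"
proof -
  have "\<forall>v. R *v v = 0 \<longrightarrow> v = 0"
  proof (intro allI impI, rule ccontr)
    fix v assume h: "R *v v = 0" "v \<noteq> 0"
    have "0 < v \<bullet> ((R + transpose R - P) *v v)" using block_br[OF assms(1) h(2)] .
    also have "\<dots> = v \<bullet> (R *v v) + v \<bullet> (transpose R *v v) - v \<bullet> (P *v v)"
      by (simp add: matrix_vector_mult_add_rdistrib matrix_vector_mult_diff_rdistrib inner_diff_right inner_add_right)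
    also have "\<dots> = - v \<bullet> (P *v v)" using h(1) quad_transpose[of v R v] by simp
    finally show False using pos_def_ge[OF assms(2), of v] by simp
  qed
  then show ?thesis
    by (metis invertible_left_inverse matrix_left_invertible_injective vec.inj_iff_eq_0)
qed

lemma matrix_inv_props:
  assumes "invertible (R::real^'n^'n)"
  shows "R ** matrix_inv R = mat 1" "matrix_inv R ** R = mat 1"
  using someI_ex[OF assms[unfolded invertible_def]] unfolding matrix_inv_def by auto

lemma lmi_bound:
  fixes W :: "real^'a^'a" and G :: "real^'n^'a" and R P :: "real^'n^'n"
  assumes B: "pos_def (block2 W (G ** R) (transpose (G ** R)) (R + transpose R - P))"
    and sP: "sym_mat P" and pP: "pos_def P" and iR: "invertible R"
  shows "(transpose G *v u) \<bullet> (P *v (transpose G *v u)) \<le> u \<bullet> (W *v u)"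
proof -
  define y where "y = transpose G *v u"
  define v where "v = - (matrix_inv R *v (P *v y))"
  have Rv: "R *v v = - (P *v y)"
    unfolding v_def by (metis matrix_vector_mul_assoc matrix_inv_props(1)[OF iR] matrix_vector_mul_lid mv_neg)
  have e0: "0 \<le> jv u v \<bullet> (block2 W (G ** R) (transpose (G ** R)) (R + transpose R - P) *v jv u v)"
    using pos_def_ge[OF B] .
  have e1: "u \<bullet> ((G ** R) *v v) = - (y \<bullet> (P *v y))"
  proof -
    have "u \<bullet> ((G ** R) *v v) = u \<bullet> (G *v (R *v v))" by (simp add: matrix_vector_mul_assoc)
    also have "\<dots> = - (u \<bullet> (G *v (P *v y)))" unfolding Rv by (simp add: mv_neg)
    also have "\<dots> = - ((P *v y) \<bullet> y)" unfolding y_def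
      using quad_transpose[of "P *v (transpose G *v u)" G u] by simp
    finally show ?thesis by (simp add: inner_commute)
  qed
  have e2: "v \<bullet> ((R + transpose R - P) *v v) = - 2 * (v \<bullet> (P *v y)) - v \<bullet> (P *v v)"
  proof -
    have "v \<bullet> ((R + transpose R - P) *v v) = v \<bullet> (R *v v) + v \<bullet> (transpose R *v v) - v \<bullet> (P *v v)"
      by (simp add: matrix_vector_mult_add_rdistrib matrix_vector_mult_diff_rdistrib inner_diff_right inner_add_right)
    also have "\<dots> = 2 * (v \<bullet> (R *v v)) - v \<bullet> (P *v v)" using quad_transpose[of v R v] by simp
    finally show ?thesis by (simp add: Rv)
  qed
  have e3: "0 \<le> (v + y) \<bullet> (P *v (v + y))" using pos_def_ge[OF pP] .
  have e4: "(v + y) \<bullet> (P *v (v + y)) = v \<bullet> (P *v v) + 2 * (v \<bullet> (P *v y)) + y \<bullet> (P *v y)"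
    using sym_quad[OF sP, of v y]
    by (simp add: matrix_vector_right_distrib inner_add_left inner_add_right)
  have "0 \<le> u \<bullet> (W *v u) + u \<bullet> ((G ** R) *v v) + v \<bullet> (transpose (G ** R) *v u) + v \<bullet> ((R + transpose R - P) *v v)"
    using e0 by (simp add: block_quad)
  then have "0 \<le> u \<bullet> (W *v u) - 2 * (y \<bullet> (P *v y)) - 2 * (v \<bullet> (P *v y)) - v \<bullet> (P *v v)"
    using e1 e2 quad_transpose[of v "G ** R" u] by linarith
  then show ?thesis using e3 e4 unfolding y_def by linarith
qed

lemma axis_vm: "(axis i 1 v* (G::real^'a^'b)) $ j = G $ i $ j"
  unfolding vector_matrix_mult_def axis_def by (simp add: if_distrib[of "\<lambda>a. a * _"] sum.delta cong: if_cong)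

lemma trace_GGt: "trace ((G::real^'a^'b) ** transpose G) = (\<Sum>i\<in>UNIV. (axis i 1 v* G) \<bullet> (axis i 1 v* G))"
  unfolding trace_def inner_vec_def by (simp add: axis_vm matrix_matrix_mult_def transpose_def)

lemma axis_quad: "axis i 1 \<bullet> ((Q::real^'a^'a) *v axis i 1) = Q $ i $ i"
proof -
  have "axis i 1 \<bullet> ((Q::real^'a^'a) *v axis i 1) = (Q *v axis i 1) \<bullet> axis i 1" by (rule inner_commute)
  also have "\<dots> = (Q *v axis i 1) $ i" by (rule cart_eq_inner_axis[symmetric])
  finally show ?thesis by (simp add: matrix_vector_mult_basis column_def)
qed

lemma iter_bound:
  fixes Ak P :: "real^'n^'n" and E :: "real^'z^'n"
  assumes step: "\<And>x. (x v* Ak) \<bullet> (P *v (x v* Ak)) \<le> x \<bullet> ((P - E ** transpose E) *v x)"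
    and pP: "pos_def P"
  shows "(\<Sum>s<N. ((x v* matpow Ak s) v* E) \<bullet> ((x v* matpow Ak s) v* E)) \<le> x \<bullet> (P *v x)"
proof (induction N arbitrary: x)
  case 0
  then show ?case using pos_def_ge[OF pP] by simp
next
  case (Suc N)
  have ms: "x v* matpow Ak (Suc s) = (x v* Ak) v* matpow Ak s" for s
    by (simp add: vector_matrix_mul_assoc)
  have ee: "x \<bullet> ((P - E ** transpose E) *v x) = x \<bullet> (P *v x) - (x v* E) \<bullet> (x v* E)"
  proof -
    have "x \<bullet> ((E ** transpose E) *v x) = (x v* E) \<bullet> (x v* E)"
      by (metis dot_lmul_matrix matrix_vector_mul_assoc transpose_matrix_vector)
    then show ?thesis by (simp add: matrix_vector_mult_diff_rdistrib inner_diff_right)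
  qed
  have "(\<Sum>s<Suc N. ((x v* matpow Ak s) v* E) \<bullet> ((x v* matpow Ak s) v* E))
      = (x v* E) \<bullet> (x v* E) + (\<Sum>s<N. (((x v* Ak) v* matpow Ak s) v* E) \<bullet> (((x v* Ak) v* matpow Ak s) v* E))"
    unfolding sum.lessThan_Suc_shift ms by simp
  also have "\<dots> \<le> (x v* E) \<bullet> (x v* E) + (x v* Ak) \<bullet> (P *v (x v* Ak))"
    using Suc.IH[of "x v* Ak"] by simp
  also have "\<dots> \<le> x \<bullet> (P *v x)" using step[of x] ee by simp
  finally show ?case .
qed

lemma sum_prod_univ: "sum f (UNIV::('a::finite \<times> 'b::finite) set) = (\<Sum>a\<in>UNIV. \<Sum>b\<in>UNIV. f (a,b))"
  by (simp add: sum.cartesian_product UNIV_Times_UNIV[symmetric] del: UNIV_Times_UNIV)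

lemma sum_if_outer: "(\<Sum>a\<in>(UNIV::'a::finite set). \<Sum>b\<in>(UNIV::'b::finite set). if a = j then g b else (0::real)) = (\<Sum>b\<in>UNIV. g b)"
  by (subst sum.swap) (simp add: sum.delta')

lemma linear_rmul: "linear (\<lambda>X::real^'a^'b. X ** (R::real^'a^'a))"
  by (rule linearI) (simp_all add: vec_eq_iff matrix_matrix_mult_def sum_distrib_left mult.assoc distrib_right sum.distrib)

lemma ups_closed:
  fixes Sf :: "'k::finite \<Rightarrow> real^'n^'m"
  assumes "R \<in> Upsilon (rep_matrix Sf)"
  shows "Sf j ** R \<in> span (range Sf)"
proof -
  obtain \<Lambda> :: "real^'k^'k" where eq: "rep_matrix Sf ** kron (mat 1 :: real^'k^'k) R = rep_matrix Sf ** kron \<Lambda> (mat 1 :: real^'n^'n)"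
    using assms unfolding Upsilon_def by blast
  have "Sf j ** R = (\<Sum>l\<in>UNIV. (\<Lambda>$l$j) *\<^sub>R Sf l)"
  unfolding vec_eq_iff
  proof (intro allI)
    fix i c
    have "(rep_matrix Sf ** kron (mat 1 :: real^'k^'k) R) $ i $ (j,c) = (rep_matrix Sf ** kron \<Lambda> (mat 1 :: real^'n^'n)) $ i $ (j,c)"
      using eq by simp
    moreover have "(rep_matrix Sf ** kron (mat 1 :: real^'k^'k) R) $ i $ (j,c) = (Sf j ** R) $ i $ c"
      by (simp add: rep_matrix_def kron_def matrix_matrix_mult_def sum_prod_univ mat_def if_distrib[of "\<lambda>a. _ * (a * _)"] sum.delta sum_if_outer cong: if_cong)
    moreover have "(rep_matrix Sf ** kron \<Lambda> (mat 1 :: real^'n^'n)) $ i $ (j,c) = (\<Sum>l\<in>UNIV. (\<Lambda>$l$j) *\<^sub>R Sf l) $ i $ c"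
      by (simp add: rep_matrix_def kron_def matrix_matrix_mult_def sum_prod_univ mat_def if_distrib[of "\<lambda>a. _ * (_ * a)"] sum.delta sum_component mult.commute cong: if_cong)
    ultimately show "(Sf j ** R) $ i $ c = (\<Sum>l\<in>UNIV. (\<Lambda>$l$j) *\<^sub>R Sf l) $ i $ c" by simp
  qed
  also have "\<dots> \<in> span (range Sf)"
    by (intro span_sum span_mul span_base) auto
  finally show ?thesis .
qed

lemma span_closed:
  fixes Sf :: "'k::finite \<Rightarrow> real^'n^'m"
  assumes "R \<in> Upsilon (rep_matrix Sf)"
  shows "(\<lambda>X. X ** R) ` span (range Sf) \<subseteq> span (range Sf)"
proof -
  have "(\<lambda>X. X ** R) ` span (range Sf) = span ((\<lambda>X. X ** R) ` range Sf)"
    by (rule linear_span_image[OF linear_rmul, symmetric])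
  also have "\<dots> \<subseteq> span (range Sf)"
    using ups_closed[OF assms] by (intro span_minimal) auto
  finally show ?thesis .
qed

lemma in_S:
  fixes Sf :: "'k::finite \<Rightarrow> real^'n^'m"
  assumes "R \<in> Upsilon (rep_matrix Sf)" "invertible R" "L \<in> span (range Sf)"
  shows "L ** matrix_inv R \<in> span (range Sf)"
proof -
  let ?f = "\<lambda>X::real^'n^'m. X ** R"
  let ?V = "span (range Sf)"
  have inj: "inj_on ?f (span ?V)"
    by (rule inj_onI) (metis matrix_inv_props(1)[OF assms(2)] matrix_mul_assoc matrix_mul_rid)
  have "?f ` ?V = ?V"
  proof (rule subspace_dim_equal)
    show "subspace (?f ` ?V)" by (rule linear_subspace_image[OF linear_rmul subspace_span])
    show "subspace ?V" by simp
    show "?f ` ?V \<subseteq> ?V" by (rule span_closed[OF assms(1)])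
    show "dim ?V \<le> dim (?f ` ?V)" using dim_image_eq[OF linear_rmul inj] by simp
  qed
  then obtain X where X: "X \<in> ?V" "L = X ** R" using assms(3) by blast
  then have "L ** matrix_inv R = X"
    by (metis matrix_inv_props(1)[OF assms(2)] matrix_mul_assoc matrix_mul_rid)
  then show ?thesis using X by simp
qed

lemma mm_add_r: "((X::real^'a^'b) + Y) ** (R::real^'c^'a) = X ** R + Y ** R"
  by (simp add: vec_eq_iff matrix_matrix_mult_def distrib_right sum.distrib)

lemma markov_sum_bound:
  fixes Ak P :: "real^'n^'n" and E :: "real^'z^'n" and Ck :: "real^'n^'q" and Q :: "real^'q^'q"
  assumes step: "\<And>x. (x v* Ak) \<bullet> (P *v (x v* Ak)) \<le> x \<bullet> ((P - E ** transpose E) *v x)"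
    and step2: "\<And>u. (u v* Ck) \<bullet> (P *v (u v* Ck)) \<le> u \<bullet> (Q *v u)"
    and pP: "pos_def P"
  shows "(\<Sum>t<N. markov_sq Ak E Ck t) \<le> trace Q"
proof -
  have m: "markov_sq Ak E Ck t = (\<Sum>i\<in>UNIV. (((axis i 1 v* Ck) v* matpow Ak t) v* E) \<bullet> (((axis i 1 v* Ck) v* matpow Ak t) v* E))" for t
    unfolding markov_sq_def Let_def trace_GGt by (simp add: vector_matrix_mul_assoc)
  have "(\<Sum>t<N. markov_sq Ak E Ck t) = (\<Sum>i\<in>UNIV. \<Sum>t<N. (((axis i 1 v* Ck) v* matpow Ak t) v* E) \<bullet> (((axis i 1 v* Ck) v* matpow Ak t) v* E))"
    unfolding m by (rule sum.swap)
  also have "\<dots> \<le> (\<Sum>i\<in>UNIV. (axis i 1 v* Ck) \<bullet> (P *v (axis i 1 v* Ck)))"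
    by (intro sum_mono iter_bound[OF step pP])
  also have "\<dots> \<le> (\<Sum>i\<in>UNIV. axis i 1 \<bullet> (Q *v axis i 1))"
    by (intro sum_mono step2)
  also have "\<dots> = trace Q" by (simp add: axis_quad trace_def)
  finally show ?thesis .
qed

lemma markov_nonneg: "0 \<le> markov_sq Ak E Ck t"
  unfolding markov_sq_def Let_def trace_GGt by (intro sum_nonneg) simp

theorem lemma4:
  fixes A :: "real^'n^'n" and B :: "real^'m^'n" and E :: "real^'z^'n"
    and C :: "real^'n^'q" and D :: "real^'m^'q" and \<gamma> :: real
    and \<S> :: "(real^'n^'m) set" and Sf :: "'k::finite \<Rightarrow> real^'n^'m"
    and P :: "real^'n^'n" and Q :: "real^'q^'q" and R :: "real^'n^'n" and L :: "real^'n^'m"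
  assumes "\<gamma> \<ge> 0"
    and "subspace \<S>"
    and "inj Sf" and "independent (range Sf)" and "span (range Sf) = \<S>"
    and "sym_mat P" and "sym_mat Q"
    and "R \<in> Upsilon (rep_matrix Sf)" and "L \<in> \<S>"
    and "pos_def (block2 (P - E ** transpose E) (A ** R + B ** L)
                         (transpose (A ** R + B ** L)) (R + transpose R - P))"
    and "pos_def (block2 Q (C ** R + D ** L)
                         (transpose (C ** R + D ** L)) (R + transpose R - P))"
    and "pos_def P"
    and "trace Q \<le> \<gamma>\<^sup>2"
  shows "invertible R \<and> L ** matrix_inv R \<in> \<S> \<and>
         gamma_subopt_H2 A B E C D \<gamma> (L ** matrix_inv R)"
proof -
  have iR: "invertible R" by (rule R_inv[OF assms(10) assms(12)])
  define K where "K = L ** matrix_inv R"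
  have KR: "K ** R = L" unfolding K_def
    by (metis matrix_inv_props(2)[OF iR] matrix_mul_assoc matrix_mul_rid)
  have inS: "K \<in> \<S>" unfolding K_def using in_S[OF assms(8) iR] assms(5,9) by simp
  have e1: "A ** R + B ** L = (A + B ** K) ** R" by (simp add: mm_add_r KR flip: matrix_mul_assoc)
  have e2: "C ** R + D ** L = (C + D ** K) ** R" by (simp add: mm_add_r KR flip: matrix_mul_assoc)
  have s1: "(x v* (A + B ** K)) \<bullet> (P *v (x v* (A + B ** K))) \<le> x \<bullet> ((P - E ** transpose E) *v x)" for x
    using lmi_bound[OF assms(10)[unfolded e1] assms(6) assms(12) iR, of x] by simp
  have s2: "(u v* (C + D ** K)) \<bullet> (P *v (u v* (C + D ** K))) \<le> u \<bullet> (Q *v u)" for u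
    using lmi_bound[OF assms(11)[unfolded e2] assms(6) assms(12) iR, of u] by simp
  let ?f = "markov_sq (A + B ** K) E (C + D ** K)"
  have bnd: "sum ?f {..<N} \<le> \<gamma>\<^sup>2" for N
    using markov_sum_bound[OF s1 s2 assms(12), of N] assms(13) by linarith
  have sm: "summable ?f" by (rule summableI_nonneg_bounded[OF markov_nonneg bnd])
  have "suminf ?f \<le> \<gamma>\<^sup>2" by (rule suminf_le_const[OF sm bnd])
  then have "sqrt (suminf ?f) \<le> \<gamma>" using assms(1) real_sqrt_le_mono by fastforce
  then have "gamma_subopt_H2 A B E C D \<gamma> K"
    unfolding gamma_subopt_H2_def h2_norm_def using sm by simp
  then show ?thesis using iR inS K_def by simp
qed

end
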